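(* Let $R$ be an associative ring (not necessarily unital) which is solvable in the sense below. If there is an associative ring $S$ with $[S,S]\cong R$, then $R$ is nilpotent, i.e. $R^m=0$ for some $m$ (all products of $m$ elements of $R$ vanish). In particular, a nonzero commutative ring with identity is not isomorphic to $[S,S]$ for any associative ring $S$.
   Context: For an associative ring $R$, $[R,R]$ denotes the two-sided ideal of $R$ generated by all Lie commutators $xy-yx$, $x,y\in R$. Define $\delta^{(0)}(R)=R$ and $\delta^{(n)}(R)$ to be the two-sided ideal of $R$ generated by all commutators $ab-ba$ with $a,b\in\delta^{(n-1)}(R)$. $R$ is called solvable (in the sense of Jennings) if $\delta^{(n)}(R)=0$ for some $n$. *)

theory Defs
  imports Main
begin

inductive_set ideal_gen :: "'a::ring set \<Rightarrow> 'a set" for A :: "'a set" where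
  base: "a \<in> A \<Longrightarrow> a \<in> ideal_gen A"
| zero: "0 \<in> ideal_gen A"
| diff: "x \<in> ideal_gen A \<Longrightarrow> y \<in> ideal_gen A \<Longrightarrow> x - y \<in> ideal_gen A"
| lmult: "x \<in> ideal_gen A \<Longrightarrow> r * x \<in> ideal_gen A"
| rmult: "x \<in> ideal_gen A \<Longrightarrow> x * r \<in> ideal_gen A"

definition comm_ideal :: "'a::ring set" where
  "comm_ideal = ideal_gen {x * y - y * x | x y. True}"

text \<open>Jennings' derived series delta^(n)(R) (ideals of the whole ring R).\<close>
primrec delta :: "nat \<Rightarrow> 'a::ring set" where
  "delta 0 = UNIV"
| "delta (Suc n) = ideal_gen {a * b - b * a | a b. a \<in> delta n \<and> b \<in> delta n}"

definition solvable_ring :: "'a::ring itself \<Rightarrow> bool" where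
  "solvable_ring _ \<longleftrightarrow> (\<exists>n. delta n = ({0} :: 'a set))"

text \<open>Product x 0 * x 1 * ... * x n of n+1 elements.\<close>
primrec prodn :: "(nat \<Rightarrow> 'a::ring) \<Rightarrow> nat \<Rightarrow> 'a" where
  "prodn x 0 = x 0"
| "prodn x (Suc n) = prodn x n * x (Suc n)"

definition nilpotent_ring :: "'a::ring itself \<Rightarrow> bool" where
  "nilpotent_ring _ \<longleftrightarrow> (\<exists>m. \<forall>x :: nat \<Rightarrow> 'a. prodn x m = 0)"

definition iso_onto_comm_ideal :: "('a::ring \<Rightarrow> 'b::ring) \<Rightarrow> bool" where
  "iso_onto_comm_ideal f \<longleftrightarrow> bij_betw f UNIV (comm_ideal :: 'b set) \<and>
     (\<forall>x y. f (x + y) = f x + f y \<and> f (x * y) = f x * f y)"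

end

theory Submission
  imports Defs
begin

lemma ig_add:
  assumes "x \<in> ideal_gen A" "y \<in> ideal_gen A" shows "x + y \<in> ideal_gen A"
proof -
  have "0 - y \<in> ideal_gen A" using assms(2) by (rule ideal_gen.diff[OF ideal_gen.zero])
  then have "x - (0 - y) \<in> ideal_gen A" by (rule ideal_gen.diff[OF assms(1)])
  then show ?thesis by simp
qed

lemma ig_diff2:
  assumes "x \<in> ideal_gen A" "y \<in> ideal_gen A" "z = x - y" shows "z \<in> ideal_gen A"
  using assms ideal_gen.diff by blast

lemma ig_add2:
  assumes "x \<in> ideal_gen A" "y \<in> ideal_gen A" "z = x + y" shows "z \<in> ideal_gen A"
  using assms ig_add by blast

lemma ig_lm: "x \<in> ideal_gen A \<Longrightarrow> r * x \<in> ideal_gen A"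
  by (rule ideal_gen.lmult)
lemma ig_rm: "x \<in> ideal_gen A \<Longrightarrow> x * r \<in> ideal_gen A"
  by (rule ideal_gen.rmult)

definition Cm :: "'a::ring set \<Rightarrow> 'a set" where
  "Cm X = {a * b - b * a | a b. a \<in> X \<and> b \<in> X}"

definition absorbing :: "'a::ring set \<Rightarrow> bool" where
  "absorbing J \<longleftrightarrow> (\<forall>a\<in>J. \<forall>s. s * a \<in> J \<and> a * s \<in> J)"

lemma comm_ideal_absorbing: "absorbing (comm_ideal :: 'a::ring set)"
  unfolding absorbing_def comm_ideal_def by (auto intro: ideal_gen.lmult ideal_gen.rmult)

lemma lemA:
  fixes J :: "'a::ring set"
  assumes ab: "absorbing J"
    and cm: "\<And>a b. a \<in> J \<Longrightarrow> b \<in> J \<Longrightarrow> a * b - b * a \<in> ideal_gen Y"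
    and a: "a \<in> J" and b: "b \<in> J" and a': "a' \<in> J" and z: "z \<in> comm_ideal"
  shows "a * b * a' * z \<in> ideal_gen Y"
proof -
  let ?K = "ideal_gen Y"
  have cen: "a * b * s - s * (a * b) \<in> ?K" if "a \<in> J" "b \<in> J" for a b s
  proof -
    have i: "a * (b * s) - (b * s) * a \<in> ?K" using that ab cm unfolding absorbing_def by blast
    have ii: "(s * a) * b - b * (s * a) \<in> ?K" using that ab cm unfolding absorbing_def by blast
    show ?thesis by (rule ig_diff2[OF i ii]) (simp add: algebra_simps)
  qed
  have sw: "a * s * b - a * b * s \<in> ?K" if "a \<in> J" "b \<in> J" for a b s
  proof -
    have i: "(a * s) * b - b * (a * s) \<in> ?K" using that ab cm unfolding absorbing_def by blast
    have ii: "(b * a - a * b) * s \<in> ?K" using that cm by (intro ig_rm) blast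
    show ?thesis by (rule ig_add2[OF i ii]) (simp add: algebra_simps)
  qed
  let ?p = "a * b"
  have pJ: "?p \<in> J" using a b ab unfolding absorbing_def by blast
  have key: "?p * c * (x * y - y * x) \<in> ?K" if c: "c \<in> J" for c x y
  proof -
    have pyJ: "?p * y \<in> J" using pJ ab unfolding absorbing_def by blast
    have T1: "c * x * (?p * y) - c * (?p * y) * x \<in> ?K" using sw[OF c pyJ] .
    have T2: "c * (x * ?p - ?p * x) * y \<in> ?K"
    proof -
      have "0 - (?p * x - x * ?p) \<in> ?K" using cen[OF a b, of x] by (rule ideal_gen.diff[OF ideal_gen.zero])
      then have "x * ?p - ?p * x \<in> ?K" by (simp add: algebra_simps)
      then show ?thesis by (intro ig_rm ig_lm)
    qed
    have T3: "(?p * c - c * ?p) * (x * y - y * x) \<in> ?K"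
      using cen[OF a b, of c] by (intro ig_rm) simp
    have T4: "c * ?p * (x * y - y * x) \<in> ?K"
      by (rule ig_diff2[OF T1 T2]) (simp add: algebra_simps)
    show ?thesis by (rule ig_add2[OF T3 T4]) (simp add: algebra_simps)
  qed
  have "?p * c * z \<in> ?K" if "z \<in> comm_ideal" "c \<in> J" for z c
    using that(1)[unfolded comm_ideal_def] that(2)
  proof (induction arbitrary: c)
    case (base x) then show ?case using key by auto
  next
    case zero then show ?case by (simp add: ideal_gen.zero)
  next
    case (diff x y)
    then have "?p * c * x \<in> ?K" "?p * c * y \<in> ?K" by blast+
    then show ?case by (rule ig_diff2) (simp add: algebra_simps)
  next
    case (lmult x r)
    have "c * r \<in> J" using lmult ab unfolding absorbing_def by blast
    then have "?p * (c * r) * x \<in> ?K" using lmult by blast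
    then show ?case by (simp add: mult.assoc)
  next
    case (rmult x r)
    then have "?p * c * x \<in> ?K" by blast
    then have "?p * c * x * r \<in> ?K" by (rule ig_rm)
    then show ?case by (simp add: mult.assoc)
  qed
  then show ?thesis using z a' by blast
qed


inductive_set igen :: "'a::ring set \<Rightarrow> 'a set \<Rightarrow> 'a set" for I X :: "'a set" where
  base: "a \<in> X \<Longrightarrow> a \<in> igen I X"
| zero: "0 \<in> igen I X"
| diff: "x \<in> igen I X \<Longrightarrow> y \<in> igen I X \<Longrightarrow> x - y \<in> igen I X"
| lmult: "x \<in> igen I X \<Longrightarrow> r \<in> I \<Longrightarrow> r * x \<in> igen I X"
| rmult: "x \<in> igen I X \<Longrightarrow> r \<in> I \<Longrightarrow> x * r \<in> igen I X"

lemma igen_mono: "z \<in> igen I X \<Longrightarrow> X \<subseteq> Y \<Longrightarrow> z \<in> igen I Y"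
  by (induction rule: igen.induct) (auto intro: igen.intros)

lemma lemB:
  fixes I :: "'a::ring set"
  assumes ab: "absorbing I" and v: "v \<in> ideal_gen X" and u: "u \<in> I" and w: "w \<in> I"
  shows "u * v * w \<in> igen I X"
  using v u w
proof (induction arbitrary: u w)
  case (base a)
  then show ?case by (intro igen.rmult igen.lmult igen.base)
next
  case zero then show ?case by (simp add: igen.zero)
next
  case (diff x y)
  then have "u * x * w - u * y * w \<in> igen I X" by (intro igen.diff) auto
  then show ?case by (simp add: algebra_simps)
next
  case (lmult x r)
  then have "u * r \<in> I" using ab unfolding absorbing_def by blast
  then have "(u * r) * x * w \<in> igen I X" using lmult by blast
  then show ?case by (simp add: mult.assoc)
next
  case (rmult x r)
  then have "r * w \<in> I" using ab unfolding absorbing_def by blast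
  then have "u * x * (r * w) \<in> igen I X" using rmult by blast
  then show ?case by (simp add: mult.assoc)
qed

fun pw :: "'a::ring set \<Rightarrow> nat \<Rightarrow> 'a set" where
  "pw X 0 = X"
| "pw X (Suc k) = {a * b | a b. a \<in> pw X k \<and> b \<in> X}"

lemma pw_mult: "a \<in> pw X j \<Longrightarrow> b \<in> pw X k \<Longrightarrow> a * b \<in> pw X (j + k + 1)"
proof (induction k arbitrary: b)
  case 0 then show ?case by auto
next
  case (Suc k)
  then obtain b' c where "b = b' * c" "b' \<in> pw X k" "c \<in> X" by auto
  moreover then have "a * b' \<in> pw X (j + k + 1)" using Suc by blast
  ultimately have "(a * b') * c \<in> pw X (Suc (j + k + 1))" by auto
  then show ?case using \<open>b = b' * c\<close> by (simp add: mult.assoc)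
qed

lemma pw_split: "n = j + k + 1 \<Longrightarrow> z \<in> pw X n \<Longrightarrow> \<exists>a b. a \<in> pw X j \<and> b \<in> pw X k \<and> z = a * b"
proof (induction k arbitrary: z n)
  case 0 then show ?case by auto
next
  case (Suc k)
  then obtain z' c where zc: "z = z' * c" "z' \<in> pw X (j + k + 1)" "c \<in> X" by auto
  then obtain a b' where "a \<in> pw X j" "b' \<in> pw X k" "z' = a * b'" using Suc.IH by blast
  moreover have "b' * c \<in> pw X (Suc k)" using \<open>b' \<in> pw X k\<close> zc(3) by auto
  ultimately show ?case using zc by (metis mult.assoc)
qed

lemma pw_absorbing: "absorbing X \<Longrightarrow> absorbing (pw X k)"
proof (induction k)
  case 0 then show ?case by simp
next
  case (Suc k)
  then have A: "absorbing (pw X k)" by blast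
  show ?case unfolding absorbing_def
  proof (intro ballI allI conjI)
    fix z s assume "z \<in> pw X (Suc k)"
    then obtain a c where zc: "z = a * c" "a \<in> pw X k" "c \<in> X" by auto
    have "s * a \<in> pw X k" using A zc unfolding absorbing_def by blast
    then have "(s * a) * c \<in> pw X (Suc k)" using zc by auto
    then show "s * z \<in> pw X (Suc k)" using zc by (simp add: mult.assoc)
    have "c * s \<in> X" using Suc.prems zc unfolding absorbing_def by blast
    then show "z * s \<in> pw X (Suc k)" using zc by (auto simp: mult.assoc)
  qed
qed

lemma pw_sub: "absorbing X \<Longrightarrow> pw X k \<subseteq> X"
  by (cases k) (auto simp: absorbing_def)


lemma Cm_mono: "A \<subseteq> B \<Longrightarrow> Cm A \<subseteq> Cm B"
  unfolding Cm_def by blast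

lemma step:
  assumes sub: "pw (comm_ideal :: 'b::ring set) m \<subseteq> T"
  shows "pw (comm_ideal :: 'b set) (9 * m + 11) \<subseteq> igen comm_ideal (Cm T)"
proof
  let ?I = "comm_ideal :: 'b set"
  let ?J = "pw ?I m"
  let ?K = "ideal_gen (Cm ?J)"
  have absI: "absorbing ?I" by (rule comm_ideal_absorbing)
  have absJ: "absorbing ?J" by (rule pw_absorbing[OF absI])
  have cm: "a * b - b * a \<in> ?K" if "a \<in> ?J" "b \<in> ?J" for a b
    using that by (intro ideal_gen.base) (auto simp: Cm_def)
  have U: "u \<in> ?K" if u: "u \<in> pw ?I (3 * m + 3)" for u
  proof -
    have "\<exists>e d. e \<in> pw ?I (3 * m + 2) \<and> d \<in> pw ?I 0 \<and> u = e * d"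
    by (rule pw_split[OF _ u]) simp
  then obtain e d where ed: "e \<in> pw ?I (3 * m + 2)" "d \<in> pw ?I 0" "u = e * d" by blast
    obtain a e' where ae: "a \<in> ?J" "e' \<in> pw ?I (2 * m + 1)" "e = a * e'"
      using pw_split[OF _ ed(1), of m "2 * m + 1"] by auto
    obtain b a' where ba: "b \<in> ?J" "a' \<in> ?J" "e' = b * a'"
      using pw_split[OF _ ae(2), of m m] by auto
    have "a * b * a' * d \<in> ?K"
      by (rule lemA[OF absJ cm ae(1) ba(1) ba(2)]) (use ed(2) in auto)
    then show ?thesis using ed ae ba by (simp add: mult.assoc)
  qed
  fix z assume z: "z \<in> pw ?I (9 * m + 11)"
  have "\<exists>u r. u \<in> pw ?I (3 * m + 3) \<and> r \<in> pw ?I (6 * m + 7) \<and> z = u * r"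
    by (rule pw_split[OF _ z]) simp
  then obtain u r where ur: "u \<in> pw ?I (3 * m + 3)" "r \<in> pw ?I (6 * m + 7)" "z = u * r" by blast
  have "\<exists>v w. v \<in> pw ?I (3 * m + 3) \<and> w \<in> pw ?I (3 * m + 3) \<and> r = v * w"
    by (rule pw_split[OF _ ur(2)]) simp
  then obtain v w where vw: "v \<in> pw ?I (3 * m + 3)" "w \<in> pw ?I (3 * m + 3)" "r = v * w" by blast
  have "u \<in> ?I" "w \<in> ?I" using ur(1) vw(2) pw_sub[OF absI] by blast+
  then have "u * v * w \<in> igen ?I (Cm ?J)" using lemB[OF absI U[OF vw(1)]] by blast
  then have "u * v * w \<in> igen ?I (Cm T)" by (rule igen_mono) (rule Cm_mono[OF sub])
  then show "z \<in> igen ?I (Cm T)" using ur vw by (simp add: mult.assoc)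
qed


primrec D :: "nat \<Rightarrow> 'b::ring set" where
  "D 0 = comm_ideal"
| "D (Suc n) = igen comm_ideal (Cm (D n))"

primrec NN :: "nat \<Rightarrow> nat" where
  "NN 0 = 0"
| "NN (Suc n) = 9 * NN n + 11"

lemma pw_D: "pw (comm_ideal :: 'b::ring set) (NN n) \<subseteq> D n"
proof (induction n)
  case 0 then show ?case by simp
next
  case (Suc n) then show ?case using step[OF Suc] by simp
qed

lemma hom_facts:
  fixes f :: "'a::ring \<Rightarrow> 'b::ring"
  assumes "iso_onto_comm_ideal f"
  shows "f 0 = 0" "\<And>x y. f (x - y) = f x - f y" "\<And>x y. f (x * y) = f x * f y"
    "\<And>x. f x \<in> comm_ideal" "inj f" "\<And>z. z \<in> comm_ideal \<Longrightarrow> \<exists>x. z = f x"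
proof -
  have add: "\<And>x y. f (x + y) = f x + f y" and mul: "\<And>x y. f (x * y) = f x * f y"
    and bij: "bij_betw f UNIV comm_ideal" using assms unfolding iso_onto_comm_ideal_def by auto
  have "f 0 = f (0 + 0)" by simp
  then show f0: "f 0 = 0" unfolding add by simp
  show "f (x - y) = f x - f y" for x y
  proof -
    have "f (x - y) + f y = f x" by (metis add diff_add_cancel)
    then show ?thesis by (simp add: eq_diff_eq)
  qed
  show "f (x * y) = f x * f y" for x y by (rule mul)
  show "f x \<in> comm_ideal" for x using bij bij_betwE by blast
  show "inj f" using bij bij_betw_imp_inj_on by blast
  show "\<exists>x. z = f x" if "z \<in> comm_ideal" for z
    using bij that by (metis bij_betw_imp_surj_on imageE)
qed

lemma transfer:
  fixes f :: "'a::ring \<Rightarrow> 'b::ring"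
  assumes iso: "iso_onto_comm_ideal f"
  shows "f ` delta n = D n"
proof (induction n)
  case 0
  show ?case using iso unfolding iso_onto_comm_ideal_def bij_betw_def by simp
next
  case (Suc n)
  note h = hom_facts[OF iso]
  show ?case
  proof
    show "f ` delta (Suc n) \<subseteq> D (Suc n)"
    proof
      fix z assume "z \<in> f ` delta (Suc n)"
      then obtain x where x: "x \<in> delta (Suc n)" "z = f x" by blast
      have "f x \<in> D (Suc n)" using x(1) unfolding delta.simps
      proof (induction)
        case (base a)
        then obtain p q where "a = p * q - q * p" "p \<in> delta n" "q \<in> delta n" by blast
        then have "f a = f p * f q - f q * f p" "f p \<in> D n" "f q \<in> D n"
          using Suc.IH by (simp_all add: h(2,3)) blast+
        then have "f a \<in> Cm (D n)" unfolding Cm_def by blast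
        then show ?case unfolding D.simps by (rule igen.base)
      next
        case zero then show ?case by (simp add: h igen.zero)
      next
        case (diff x y) then show ?case by (simp add: h igen.diff)
      next
        case (lmult x r) then show ?case by (simp add: h igen.lmult)
      next
        case (rmult x r) then show ?case by (simp add: h igen.rmult)
      qed
      then show "z \<in> D (Suc n)" using x by simp
    qed
  next
    show "D (Suc n) \<subseteq> f ` delta (Suc n)"
    proof
      fix z :: 'b assume "z \<in> D (Suc n)"
      then have "z \<in> igen comm_ideal (Cm (D n))" by simp
      then show "z \<in> f ` delta (Suc n)"
      proof (induction)
        case (base a)
        then obtain p q where "a = p * q - q * p" "p \<in> f ` delta n" "q \<in> f ` delta n"
          using Suc.IH by (auto simp: Cm_def)
        then obtain p' q' where pq: "p' \<in> delta n" "q' \<in> delta n" "a = f (p' * q' - q' * p')"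
          by (auto simp: h(2,3))
        then have "p' * q' - q' * p' \<in> delta (Suc n)" unfolding delta.simps
          by (intro ideal_gen.base) blast
        then show ?case using pq(3) by blast
      next
        case zero
        have "0 \<in> delta (Suc n)" unfolding delta.simps by (rule ideal_gen.zero)
        then show ?case using h(1) by (metis image_eqI)
      next
        case (diff x y)
        then obtain x' y' where xy: "x = f x'" "y = f y'" "x' \<in> delta (Suc n)" "y' \<in> delta (Suc n)" by blast
        then have "x' - y' \<in> delta (Suc n)" unfolding delta.simps using ideal_gen.diff by blast
        moreover have "x - y = f (x' - y')" using xy by (simp add: h(2))
        ultimately show ?case by blast
      next
        case (lmult x r)
        then obtain x' where xx: "x = f x'" "x' \<in> delta (Suc n)" by blast
        obtain r' where rr: "r = f r'" using h(6) lmult(2) by blast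
        have "r' * x' \<in> delta (Suc n)" using xx(2) unfolding delta.simps by (rule ideal_gen.lmult)
        moreover have "r * x = f (r' * x')" using xx rr by (simp add: h(3))
        ultimately show ?case by blast
      next
        case (rmult x r)
        then obtain x' where xx: "x = f x'" "x' \<in> delta (Suc n)" by blast
        obtain r' where rr: "r = f r'" using h(6) rmult(2) by blast
        have "x' * r' \<in> delta (Suc n)" using xx(2) unfolding delta.simps by (rule ideal_gen.rmult)
        moreover have "x * r = f (x' * r')" using xx rr by (simp add: h(3))
        ultimately show ?case by blast
      qed
    qed
  qed
qed


lemma prodn_pw:
  fixes f :: "'a::ring \<Rightarrow> 'b::ring"
  assumes iso: "iso_onto_comm_ideal f"
  shows "f (prodn x k) \<in> pw comm_ideal k"
proof (induction k)
  case 0 then show ?case using hom_facts(4)[OF iso] by simp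
next
  case (Suc k)
  have "f (prodn x k) * f (x (Suc k)) \<in> pw comm_ideal (Suc k)"
    using Suc hom_facts(4)[OF iso] by auto
  then show ?case using hom_facts(3)[OF iso] by simp
qed

lemma part1:
  "solvable_ring TYPE('a::ring) \<and> (\<exists>f :: 'a \<Rightarrow> 'b::ring. iso_onto_comm_ideal f)
     \<longrightarrow> nilpotent_ring TYPE('a)"
proof
  assume "solvable_ring TYPE('a::ring) \<and> (\<exists>f :: 'a \<Rightarrow> 'b::ring. iso_onto_comm_ideal f)"
  then obtain n f where dn: "delta n = ({0} :: 'a set)" and iso: "iso_onto_comm_ideal (f :: 'a \<Rightarrow> 'b)"
    unfolding solvable_ring_def by blast
  have "D n = ({0} :: 'b set)" using transfer[OF iso, of n] dn hom_facts(1)[OF iso] by simp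
  moreover have "pw (comm_ideal :: 'b set) (NN n) \<subseteq> D n" by (rule pw_D)
  ultimately have sub: "pw (comm_ideal :: 'b set) (NN n) \<subseteq> {0}" by (simp only:)
  have "prodn x (NN n) = 0" for x :: "nat \<Rightarrow> 'a"
  proof -
    have "f (prodn x (NN n)) = 0" using prodn_pw[OF iso, of x "NN n"] sub by blast
    then have "f (prodn x (NN n)) = f 0" using hom_facts(1)[OF iso] by simp
    then show ?thesis using hom_facts(5)[OF iso] by (simp add: inj_eq)
  qed
  then show "nilpotent_ring TYPE('a)" unfolding nilpotent_ring_def by blast
qed

lemma ig_zero_only: "z \<in> ideal_gen {0::'a::ring} \<Longrightarrow> z = 0"
  by (induction rule: ideal_gen.induct) auto

lemma prodn_one: "prodn (\<lambda>_. 1 :: 'a::ring_1) k = 1"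
  by (induction k) auto

theorem proposition5p4:
  shows "(solvable_ring TYPE('a::ring) \<and> (\<exists>f :: 'a \<Rightarrow> 'b::ring. iso_onto_comm_ideal f)
            \<longrightarrow> nilpotent_ring TYPE('a))
       \<and> ((1::'c::comm_ring_1) \<noteq> 0 \<longrightarrow> \<not> (\<exists>g :: 'c \<Rightarrow> 'd::ring. iso_onto_comm_ideal g))"
proof
  show "solvable_ring TYPE('a::ring) \<and> (\<exists>f :: 'a \<Rightarrow> 'b::ring. iso_onto_comm_ideal f)
            \<longrightarrow> nilpotent_ring TYPE('a)" by (rule part1)
  show "(1::'c::comm_ring_1) \<noteq> 0 \<longrightarrow> \<not> (\<exists>g :: 'c \<Rightarrow> 'd::ring. iso_onto_comm_ideal g)"
  proof (intro impI notI)
    assume ne: "(1::'c) \<noteq> 0" and ex: "\<exists>g :: 'c \<Rightarrow> 'd::ring. iso_onto_comm_ideal g"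
    have "{a * b - b * a | a b. a \<in> delta 0 \<and> b \<in> delta 0} = {0::'c}"
      by (auto simp: mult.commute)
    then have "delta (Suc 0) = ({0} :: 'c set)"
      using ig_zero_only ideal_gen.zero by (auto simp del: delta.simps(1))
    then have "solvable_ring TYPE('c)" unfolding solvable_ring_def by blast
    then have "nilpotent_ring TYPE('c)" using part1 ex by blast
    then obtain m where "\<forall>x :: nat \<Rightarrow> 'c. prodn x m = 0" unfolding nilpotent_ring_def by blast
    then have "prodn (\<lambda>_. 1 :: 'c) m = 0" by blast
    then show False using ne prodn_one by metis
  qed
qed

end
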